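(* Let $G$, $\widehat{D}$, $\mathcal{C}$, $\mathbf{H}_d$, $\mathcal{P}$, $\boldsymbol{\xi}_N$ be as in the context. If $\widehat{D}$ is chainable and locally linear, then $\boldsymbol{\xi}_N(\mathbf{H})\neq\mathbf{0}$ for every $\mathbf{H}\in G$ with $\mathbf{H}\notin\mathcal{C}\cup\mathcal{P}$.
   Context: $G$ is a connected matrix Lie group of $n\times n$ real matrices, dimension $m$, Lie algebra $\mathfrak{g}$ with fixed basis $\mathbf{E}_1,\dots,\mathbf{E}_m$, $S(\boldsymbol{\zeta})=\sum_k\zeta_k\mathbf{E}_k$. For $f:G\times G\to\mathbb{R}$, $\mathrm{L}_{\mathbf{V}}[f](\mathbf{V},\mathbf{W})\in\mathbb{R}^{1\times m}$ has $j$-th entry $\lim_{\epsilon\to0}\frac1\epsilon(f(\exp(S(\mathbf{e}_j)\epsilon)\mathbf{V},\mathbf{W})-f(\mathbf{V},\mathbf{W}))$, and $\mathrm{L}_{\mathbf{W}}[f]$ analogously; differentiability at a point means these limits exist and are continuous there. An EE-distance function is $\widehat{D}:G\times G\to\mathbb{R}_+$ with: (a) $\widehat{D}\ge0$, $=0$ iff $\mathbf{V}=\mathbf{W}$; (b) differentiable in both arguments almost everywhere, with some $D_{\min,\mathcal{C}}>0$ such that the derivatives exist whenever $0<\widehat{D}<D_{\min,\mathcal{C}}$, and where a partial derivative does not exist all its directional limits exist and are bounded. A path generating function is $\Phi:[0,1]\times G\times G\to G$, differentiable in $\sigma$, with $\Phi(0,\mathbf{V},\mathbf{W})=\mathbf{V}$,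 $\Phi(1,\mathbf{V},\mathbf{W})=\mathbf{W}$. $\widehat{D}$ is chainable if it is an EE-distance and some path generating function $\Phi$ satisfies $\widehat{D}(\mathbf{V},\mathbf{W})=\widehat{D}(\mathbf{V},\Phi(\sigma,\mathbf{V},\mathbf{W}))+\widehat{D}(\Phi(\sigma,\mathbf{V},\mathbf{W}),\mathbf{W})$ for all $\mathbf{V},\mathbf{W}\in G$, $\sigma\in[0,1]$; it is locally linear if moreover $\lim_{\sigma\to0^+}\frac1\sigma\widehat{D}(\mathbf{A},\Phi(\sigma,\mathbf{A},\mathbf{B}))>0$ for all $\mathbf{A}\neq\mathbf{B}$. $\mathcal{C}$ is the image of a differentiable $\mathbf{H}_d:[0,1]\to G$ without self-intersections. $D(\mathbf{H})\triangleq\min_{s\in[0,1]}\widehat{D}(\mathbf{H},\mathbf{H}_d(s))$. $\mathcal{P}_1$: points where the minimizer is not unique; for $\mathbf{H}\notin\mathcal{P}_1$, $s^*=s^*(\mathbf{H})$ is the unique minimizer. $\mathcal{P}_2$: points $\mathbf{H}\notin\mathcal{P}_1\cup\mathcal{C}$ with $(\mathbf{H},\mathbf{H}_d(s^* ))$ a non-differentiability point of $\widehat{D}$. $\mathcal{P}=\mathcal{P}_1\cup\mathcal{P}_2$. For $\mathbf{H}\notin\mathcal{C}\cup\mathcal{P}$, $\boldsymbol{\xi}_N(\mathbf{H})\triangleq-\mathrm{L}_{\mathbf{V}}[\widehat{D}](\mathbf{H},\mathbf{H}_d(s^* ))^\top$. *)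

theory Defs
  imports "HOL-Analysis.Analysis"
begin

definition matpow :: "real^'n^'n \<Rightarrow> nat \<Rightarrow> real^'n^'n" where
  "matpow A k = (((\<lambda>B. A ** B) ^^ k) (mat 1))"

definition mexp :: "real^'n^'n \<Rightarrow> real^'n^'n" where
  "mexp A = (\<Sum>k. (1 / fact k) *\<^sub>R matpow A k)"

definition matrix_lie_group :: "(real^'n^'n) set \<Rightarrow> bool" where
  "matrix_lie_group G \<longleftrightarrow>
     G \<subseteq> {A. invertible A} \<and> mat 1 \<in> G \<and>
     (\<forall>A\<in>G. \<forall>B\<in>G. A ** B \<in> G) \<and> (\<forall>A\<in>G. matrix_inv A \<in> G) \<and>
     closedin (top_of_set {A. invertible A}) G"

definition lie_algebra :: "(real^'n^'n) set \<Rightarrow> (real^'n^'n) set" where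
  "lie_algebra G = {X. \<forall>t::real. mexp (t *\<^sub>R X) \<in> G}"

text \<open>E indexes a basis E_1..E_m of the Lie algebra by the finite type 'm, so m = CARD('m).\<close>
definition lie_basis :: "(real^'n^'n) set \<Rightarrow> ('m::finite \<Rightarrow> real^'n^'n) \<Rightarrow> bool" where
  "lie_basis G E \<longleftrightarrow> inj E \<and> independent (range E) \<and> span (range E) = lie_algebra G"

definition Salg :: "('m::finite \<Rightarrow> real^'n^'n) \<Rightarrow> real^'m \<Rightarrow> real^'n^'n" where
  "Salg E \<zeta> = (\<Sum>k\<in>UNIV. (\<zeta> $ k) *\<^sub>R E k)"

definition qV :: "('m::finite \<Rightarrow> real^'n^'n) \<Rightarrow> (real^'n^'n \<Rightarrow> real^'n^'n \<Rightarrow> real)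
                   \<Rightarrow> real^'n^'n \<Rightarrow> real^'n^'n \<Rightarrow> real^'m \<Rightarrow> real \<Rightarrow> real" where
  "qV E f V W \<zeta> \<epsilon> = (f (mexp (\<epsilon> *\<^sub>R Salg E \<zeta>) ** V) W - f V W) / \<epsilon>"

definition qW :: "('m::finite \<Rightarrow> real^'n^'n) \<Rightarrow> (real^'n^'n \<Rightarrow> real^'n^'n \<Rightarrow> real)
                   \<Rightarrow> real^'n^'n \<Rightarrow> real^'n^'n \<Rightarrow> real^'m \<Rightarrow> real \<Rightarrow> real" where
  "qW E f V W \<zeta> \<epsilon> = (f V (mexp (\<epsilon> *\<^sub>R Salg E \<zeta>) ** W) - f V W) / \<epsilon>"

text \<open>The row vector L_V[f](V,W) (as an element of R^m); j-th entry uses S(e_j).\<close>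
definition LV :: "('m::finite \<Rightarrow> real^'n^'n) \<Rightarrow> (real^'n^'n \<Rightarrow> real^'n^'n \<Rightarrow> real)
                   \<Rightarrow> real^'n^'n \<Rightarrow> real^'n^'n \<Rightarrow> real^'m" where
  "LV E f V W = (\<chi> j. Lim (at 0) (qV E f V W (axis j 1)))"

definition LW :: "('m::finite \<Rightarrow> real^'n^'n) \<Rightarrow> (real^'n^'n \<Rightarrow> real^'n^'n \<Rightarrow> real)
                   \<Rightarrow> real^'n^'n \<Rightarrow> real^'n^'n \<Rightarrow> real^'m" where
  "LW E f V W = (\<chi> j. Lim (at 0) (qW E f V W (axis j 1)))"

definition has_LV :: "('m::finite \<Rightarrow> real^'n^'n) \<Rightarrow> (real^'n^'n \<Rightarrow> real^'n^'n \<Rightarrow> real)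
                   \<Rightarrow> real^'n^'n \<Rightarrow> real^'n^'n \<Rightarrow> bool" where
  "has_LV E f V W \<longleftrightarrow> (\<forall>j. \<exists>l. (qV E f V W (axis j 1) \<longlongrightarrow> l) (at 0))"

definition has_LW :: "('m::finite \<Rightarrow> real^'n^'n) \<Rightarrow> (real^'n^'n \<Rightarrow> real^'n^'n \<Rightarrow> real)
                   \<Rightarrow> real^'n^'n \<Rightarrow> real^'n^'n \<Rightarrow> bool" where
  "has_LW E f V W \<longleftrightarrow> (\<forall>j. \<exists>l. (qW E f V W (axis j 1) \<longlongrightarrow> l) (at 0))"

definition diff_V :: "(real^'n^'n) set \<Rightarrow> ('m::finite \<Rightarrow> real^'n^'n)
                   \<Rightarrow> (real^'n^'n \<Rightarrow> real^'n^'n \<Rightarrow> real) \<Rightarrow> real^'n^'n \<Rightarrow> real^'n^'n \<Rightarrow> bool" where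
  "diff_V G E f V W \<longleftrightarrow> has_LV E f V W \<and>
     (\<forall>\<^sub>F p in at (V, W) within G \<times> G. has_LV E f (fst p) (snd p)) \<and>
     continuous (at (V, W) within G \<times> G) (\<lambda>p. LV E f (fst p) (snd p))"

definition diff_W :: "(real^'n^'n) set \<Rightarrow> ('m::finite \<Rightarrow> real^'n^'n)
                   \<Rightarrow> (real^'n^'n \<Rightarrow> real^'n^'n \<Rightarrow> real) \<Rightarrow> real^'n^'n \<Rightarrow> real^'n^'n \<Rightarrow> bool" where
  "diff_W G E f V W \<longleftrightarrow> has_LW E f V W \<and>
     (\<forall>\<^sub>F p in at (V, W) within G \<times> G. has_LW E f (fst p) (snd p)) \<and>
     continuous (at (V, W) within G \<times> G) (\<lambda>p. LW E f (fst p) (snd p))"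

definition dirlims_V :: "('m::finite \<Rightarrow> real^'n^'n) \<Rightarrow> (real^'n^'n \<Rightarrow> real^'n^'n \<Rightarrow> real)
                   \<Rightarrow> real^'n^'n \<Rightarrow> real^'n^'n \<Rightarrow> bool" where
  "dirlims_V E f V W \<longleftrightarrow> (\<exists>B. \<forall>\<zeta>. \<exists>l. (qV E f V W \<zeta> \<longlongrightarrow> l) (at_right 0) \<and> \<bar>l\<bar> \<le> B * norm \<zeta>)"

definition dirlims_W :: "('m::finite \<Rightarrow> real^'n^'n) \<Rightarrow> (real^'n^'n \<Rightarrow> real^'n^'n \<Rightarrow> real)
                   \<Rightarrow> real^'n^'n \<Rightarrow> real^'n^'n \<Rightarrow> bool" where
  "dirlims_W E f V W \<longleftrightarrow> (\<exists>B. \<forall>\<zeta>. \<exists>l. (qW E f V W \<zeta> \<longlongrightarrow> l) (at_right 0) \<and> \<bar>l\<bar> \<le> B * norm \<zeta>)"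

text \<open>Null subsets of G x G (Haar-null), expressed through the exponential charts
  (zeta, eta) |-> (exp(S zeta) V, exp(S eta) W) around every point of G x G.\<close>
definition null_in_G2 :: "(real^'n^'n) set \<Rightarrow> ('m::finite \<Rightarrow> real^'n^'n)
                   \<Rightarrow> ((real^'n^'n) \<times> (real^'n^'n)) set \<Rightarrow> bool" where
  "null_in_G2 G E N \<longleftrightarrow> (\<forall>V\<in>G. \<forall>W\<in>G. \<exists>e>0.
     {z :: (real^'m) \<times> (real^'m). norm z < e \<and>
        (mexp (Salg E (fst z)) ** V, mexp (Salg E (snd z)) ** W) \<in> N} \<in> null_sets lborel)"

definition EE_distance :: "(real^'n^'n) set \<Rightarrow> ('m::finite \<Rightarrow> real^'n^'n)
                   \<Rightarrow> (real^'n^'n \<Rightarrow> real^'n^'n \<Rightarrow> real) \<Rightarrow> bool" where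
  "EE_distance G E D \<longleftrightarrow>
     (\<forall>V\<in>G. \<forall>W\<in>G. D V W \<ge> 0 \<and> (D V W = 0 \<longleftrightarrow> V = W)) \<and>
     null_in_G2 G E {p \<in> G \<times> G. \<not> (diff_V G E D (fst p) (snd p) \<and> diff_W G E D (fst p) (snd p))} \<and>
     (\<exists>Dmin>0. \<forall>V\<in>G. \<forall>W\<in>G. 0 < D V W \<and> D V W < Dmin \<longrightarrow>
        diff_V G E D V W \<and> diff_W G E D V W) \<and>
     (\<forall>V\<in>G. \<forall>W\<in>G. (\<not> diff_V G E D V W \<longrightarrow> dirlims_V E D V W) \<and>
                    (\<not> diff_W G E D V W \<longrightarrow> dirlims_W E D V W))"

definition path_gen :: "(real^'n^'n) set \<Rightarrow> (real \<Rightarrow> real^'n^'n \<Rightarrow> real^'n^'n \<Rightarrow> real^'n^'n) \<Rightarrow> bool" where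
  "path_gen G \<Phi> \<longleftrightarrow>
     (\<forall>\<sigma>\<in>{0..1}. \<forall>V\<in>G. \<forall>W\<in>G. \<Phi> \<sigma> V W \<in> G \<and> (\<lambda>s. \<Phi> s V W) differentiable (at \<sigma> within {0..1})) \<and>
     (\<forall>V\<in>G. \<forall>W\<in>G. \<Phi> 0 V W = V \<and> \<Phi> 1 V W = W)"

definition chain_eq :: "(real^'n^'n) set \<Rightarrow> (real^'n^'n \<Rightarrow> real^'n^'n \<Rightarrow> real)
                   \<Rightarrow> (real \<Rightarrow> real^'n^'n \<Rightarrow> real^'n^'n \<Rightarrow> real^'n^'n) \<Rightarrow> bool" where
  "chain_eq G D \<Phi> \<longleftrightarrow> (\<forall>V\<in>G. \<forall>W\<in>G. \<forall>\<sigma>\<in>{0..1}. D V W = D V (\<Phi> \<sigma> V W) + D (\<Phi> \<sigma> V W) W)"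

definition chainable :: "(real^'n^'n) set \<Rightarrow> ('m::finite \<Rightarrow> real^'n^'n)
                   \<Rightarrow> (real^'n^'n \<Rightarrow> real^'n^'n \<Rightarrow> real) \<Rightarrow> bool" where
  "chainable G E D \<longleftrightarrow> EE_distance G E D \<and> (\<exists>\<Phi>. path_gen G \<Phi> \<and> chain_eq G D \<Phi>)"

definition locally_linear :: "(real^'n^'n) set \<Rightarrow> ('m::finite \<Rightarrow> real^'n^'n)
                   \<Rightarrow> (real^'n^'n \<Rightarrow> real^'n^'n \<Rightarrow> real) \<Rightarrow> bool" where
  "locally_linear G E D \<longleftrightarrow> EE_distance G E D \<and>
     (\<exists>\<Phi>. path_gen G \<Phi> \<and> chain_eq G D \<Phi> \<and>
        (\<forall>A\<in>G. \<forall>B\<in>G. A \<noteq> B \<longrightarrow>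
           (\<exists>L>0. ((\<lambda>\<sigma>. D A (\<Phi> \<sigma> A B) / \<sigma>) \<longlongrightarrow> L) (at_right 0))))"

definition curve :: "(real^'n^'n) set \<Rightarrow> (real \<Rightarrow> real^'n^'n) \<Rightarrow> bool" where
  "curve G Hd \<longleftrightarrow> (\<forall>s\<in>{0..1}. Hd s \<in> G \<and> Hd differentiable (at s within {0..1})) \<and>
                  inj_on Hd {0..1}"

definition Cset :: "(real \<Rightarrow> real^'n^'n) \<Rightarrow> (real^'n^'n) set" where
  "Cset Hd = Hd ` {0..1}"

definition is_minimizer :: "(real^'n^'n \<Rightarrow> real^'n^'n \<Rightarrow> real) \<Rightarrow> (real \<Rightarrow> real^'n^'n)
                   \<Rightarrow> real^'n^'n \<Rightarrow> real \<Rightarrow> bool" where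
  "is_minimizer D Hd H s \<longleftrightarrow> s \<in> {0..1} \<and> (\<forall>t\<in>{0..1}. D H (Hd s) \<le> D H (Hd t))"

definition P1 :: "(real^'n^'n \<Rightarrow> real^'n^'n \<Rightarrow> real) \<Rightarrow> (real \<Rightarrow> real^'n^'n) \<Rightarrow> (real^'n^'n) set" where
  "P1 D Hd = {H. \<not> (\<exists>!s. is_minimizer D Hd H s)}"

definition sstar :: "(real^'n^'n \<Rightarrow> real^'n^'n \<Rightarrow> real) \<Rightarrow> (real \<Rightarrow> real^'n^'n) \<Rightarrow> real^'n^'n \<Rightarrow> real" where
  "sstar D Hd H = (THE s. is_minimizer D Hd H s)"

definition P2 :: "(real^'n^'n) set \<Rightarrow> ('m::finite \<Rightarrow> real^'n^'n)
                   \<Rightarrow> (real^'n^'n \<Rightarrow> real^'n^'n \<Rightarrow> real) \<Rightarrow> (real \<Rightarrow> real^'n^'n) \<Rightarrow> (real^'n^'n) set" where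
  "P2 G E D Hd = {H. H \<notin> P1 D Hd \<union> Cset Hd \<and>
      \<not> (diff_V G E D H (Hd (sstar D Hd H)) \<and> diff_W G E D H (Hd (sstar D Hd H)))}"

definition Pset :: "(real^'n^'n) set \<Rightarrow> ('m::finite \<Rightarrow> real^'n^'n)
                   \<Rightarrow> (real^'n^'n \<Rightarrow> real^'n^'n \<Rightarrow> real) \<Rightarrow> (real \<Rightarrow> real^'n^'n) \<Rightarrow> (real^'n^'n) set" where
  "Pset G E D Hd = P1 D Hd \<union> P2 G E D Hd"

definition xiN :: "('m::finite \<Rightarrow> real^'n^'n) \<Rightarrow> (real^'n^'n \<Rightarrow> real^'n^'n \<Rightarrow> real)
                   \<Rightarrow> (real \<Rightarrow> real^'n^'n) \<Rightarrow> real^'n^'n \<Rightarrow> real^'m" where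
  "xiN E D Hd H = - LV E D H (Hd (sstar D Hd H))"

end

theory Submission
  imports Defs
begin

lemma matrix_add_rdistrib': "((A::real^'n^'n) + B) ** C = (A ** C) + (B ** C)"
  by (vector matrix_matrix_mult_def sum.distrib field_simps)

lemma mat1_neq0: "mat 1 \<noteq> (0::real^'n::finite^'n)"
proof
  assume "mat 1 = (0::real^'n^'n)"
  then have "mat 1 $ (undefined::'n) $ undefined = (0::real^'n^'n) $ undefined $ undefined" by simp
  then show False by (simp add: mat_def)
qed

typedef (overloaded) 'n sqm = "UNIV :: (real^'n::finite^'n) set" by simp
setup_lifting type_definition_sqm

instantiation sqm :: (finite) real_normed_algebra_1
begin
lift_definition zero_sqm :: "'a sqm" is "0" .
lift_definition one_sqm :: "'a sqm" is "mat 1" .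
lift_definition plus_sqm :: "'a sqm \<Rightarrow> 'a sqm \<Rightarrow> 'a sqm" is "(+)" .
lift_definition minus_sqm :: "'a sqm \<Rightarrow> 'a sqm \<Rightarrow> 'a sqm" is "(-)" .
lift_definition uminus_sqm :: "'a sqm \<Rightarrow> 'a sqm" is "uminus" .
lift_definition times_sqm :: "'a sqm \<Rightarrow> 'a sqm \<Rightarrow> 'a sqm" is "(**)" .
lift_definition scaleR_sqm :: "real \<Rightarrow> 'a sqm \<Rightarrow> 'a sqm" is "(*\<^sub>R)" .
lift_definition norm_sqm :: "'a sqm \<Rightarrow> real" is "\<lambda>A. onorm ((*v) A)" .
definition dist_sqm :: "'a sqm \<Rightarrow> 'a sqm \<Rightarrow> real" where "dist_sqm a b = norm (a - b)"
definition sgn_sqm :: "'a sqm \<Rightarrow> 'a sqm" where "sgn_sqm x = scaleR (inverse (norm x)) x"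
definition uniformity_sqm :: "('a sqm \<times> 'a sqm) filter" where
  "uniformity_sqm = (INF e\<in>{0 <..}. principal {(x, y). dist x y < e})"
definition open_sqm :: "'a sqm set \<Rightarrow> bool" where
  "open_sqm S = (\<forall>x\<in>S. \<forall>\<^sub>F (x', y) in uniformity. x' = x \<longrightarrow> y \<in> S)"
instance
proof
  fix a b c :: "'a sqm" and r s :: real
  show "a + b + c = a + (b + c)" by transfer (simp add: algebra_simps)
  show "a + b = b + a" by transfer (simp add: algebra_simps)
  show "0 + a = a" by transfer simp
  show "- a + a = 0" by transfer simp
  show "a - b = a + - b" by transfer simp
  show "r *\<^sub>R (a + b) = r *\<^sub>R a + r *\<^sub>R b" by transfer (simp add: algebra_simps)
  show "(r + s) *\<^sub>R a = r *\<^sub>R a + s *\<^sub>R a" by transfer (simp add: algebra_simps)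
  show "r *\<^sub>R s *\<^sub>R a = (r * s) *\<^sub>R a" by transfer simp
  show "1 *\<^sub>R a = a" by transfer simp
  show "a * b * c = a * (b * c)" by transfer (simp add: matrix_mul_assoc)
  show "1 * a = a" by transfer simp
  show "a * 1 = a" by transfer simp
  show "(a + b) * c = a * c + b * c" by transfer (simp add: matrix_add_rdistrib')
  show "a * (b + c) = a * b + a * c" by transfer (simp add: matrix_add_ldistrib)
  show "(0::'a sqm) \<noteq> 1" by transfer (metis mat1_neq0)
  show "r *\<^sub>R a * b = r *\<^sub>R (a * b)" by transfer (simp add: scalar_matrix_assoc)
  show "a * r *\<^sub>R b = r *\<^sub>R (a * b)" by transfer (simp add: matrix_scalar_ac scalar_matrix_assoc)
  show "dist a b = norm (a - b)" by (simp add: dist_sqm_def)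
  show "sgn a = inverse (norm a) *\<^sub>R a" by (simp add: sgn_sqm_def)
  show "(uniformity :: ('a sqm \<times> 'a sqm) filter) = (INF e\<in>{0 <..}. principal {(x, y). dist x y < e})" by (simp add: uniformity_sqm_def)
  fix U :: "'a sqm set"
  show "open U = (\<forall>x\<in>U. \<forall>\<^sub>F (x', y) in uniformity. x' = x \<longrightarrow> y \<in> U)" by (simp add: open_sqm_def)
  show "norm a = 0 \<longleftrightarrow> a = 0"
    by transfer (simp add: onorm_eq_0 matrix_eq)
  show "norm (a + b) \<le> norm a + norm b"
    proof transfer
    fix A B :: "real^'a^'a"
    have "onorm ((*v) (A + B)) = onorm (\<lambda>x. A *v x + B *v x)"
      by (rule arg_cong[where f=onorm], rule ext, simp add: matrix_vector_mult_add_rdistrib)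
    also have "\<dots> \<le> onorm ((*v) A) + onorm ((*v) B)"
      by (rule onorm_triangle) auto
    finally show "onorm ((*v) (A + B)) \<le> onorm ((*v) A) + onorm ((*v) B)" .
  qed
  show "norm (r *\<^sub>R a) = \<bar>r\<bar> * norm a"
    proof transfer
    fix r and A :: "real^'a^'a"
    have "onorm ((*v) (r *\<^sub>R A)) = onorm (\<lambda>x. r *\<^sub>R (A *v x))"
      by (rule arg_cong[where f=onorm], rule ext, simp add: scaleR_matrix_vector_assoc)
    also have "\<dots> = \<bar>r\<bar> * onorm ((*v) A)"
      by (rule onorm_scaleR) auto
    finally show "onorm ((*v) (r *\<^sub>R A)) = \<bar>r\<bar> * onorm ((*v) A)" .
  qed
  show "norm (a * b) \<le> norm a * norm b"
  proof transfer
    fix A B :: "real^'a^'a"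
    have "onorm ((*v) (A ** B)) = onorm ((*v) A o (*v) B)"
      by (simp add: o_def matrix_vector_mul_assoc)
    also have "\<dots> \<le> onorm ((*v) A) * onorm ((*v) B)"
      by (rule onorm_compose) auto
    finally show "onorm ((*v) (A ** B)) \<le> onorm ((*v) A) * onorm ((*v) B)" .
  qed
  show "norm (1::'a sqm) = 1"
    proof transfer
    have "(*v) (mat 1::real^'a^'a) = (\<lambda>x. x)" by (rule ext) simp
    then show "onorm ((*v) (mat 1::real^'a^'a)) = 1" by (simp add: onorm_id)
  qed
qed
end

lemma norm_sqm_def': "norm (x::'n::finite sqm) = onorm ((*v) (Rep_sqm x))"
  by transfer simp

lemma Rep_sqm_ops:
  "Rep_sqm (x + y) = Rep_sqm x + Rep_sqm y"
  "Rep_sqm (x - y) = Rep_sqm x - Rep_sqm y"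
  "Rep_sqm (- x) = - Rep_sqm x"
  "Rep_sqm (x * y) = Rep_sqm x ** Rep_sqm y"
  "Rep_sqm (r *\<^sub>R x) = r *\<^sub>R Rep_sqm x"
  "Rep_sqm 0 = 0" "Rep_sqm 1 = mat 1"
  by (transfer, simp)+

lemma norm_rows_le: "norm (A::real^'n::finite^'m::finite) \<le> (\<Sum>i\<in>UNIV. norm (A$i))"
  unfolding norm_vec_def by (rule L2_set_le_sum) simp

lemma norm_sqm_le: "norm (x::'n::finite sqm) \<le> real (CARD('n)*CARD('n)) * norm (Rep_sqm x)"
proof -
  have "norm x \<le> (\<Sum>i\<in>UNIV. \<Sum>j\<in>UNIV. \<bar>Rep_sqm x $ i $ j\<bar>)"
    unfolding norm_sqm_def' by (rule onorm_le_matrix_component_sum)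
  also have "\<dots> \<le> (\<Sum>i\<in>(UNIV::'n set). \<Sum>j\<in>(UNIV::'n set). norm (Rep_sqm x))"
    by (intro sum_mono order_trans[OF component_le_norm_cart Finite_Cartesian_Product.norm_nth_le])
  also have "\<dots> = real (CARD('n)*CARD('n)) * norm (Rep_sqm x)" by simp
  finally show ?thesis .
qed

lemma norm_Rep_le: "norm (Rep_sqm (x::'n::finite sqm)) \<le> real (CARD('n)*CARD('n)) * norm x"
proof -
  have "norm (Rep_sqm x) \<le> (\<Sum>i\<in>UNIV. norm (Rep_sqm x $ i))" by (rule norm_rows_le)
  also have "\<dots> \<le> (\<Sum>i\<in>UNIV. \<Sum>j\<in>UNIV. \<bar>Rep_sqm x $ i $ j\<bar>)"
    by (intro sum_mono norm_le_l1_cart)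
  also have "\<dots> \<le> (\<Sum>i\<in>(UNIV::'n set). \<Sum>j\<in>(UNIV::'n set). norm x)"
    unfolding norm_sqm_def' by (intro sum_mono matrix_component_le_onorm)
  also have "\<dots> = real (CARD('n)*CARD('n)) * norm x" by simp
  finally show ?thesis .
qed

instance sqm :: (finite) banach
proof
  fix X :: "nat \<Rightarrow> 'a sqm"
  assume C: "Cauchy X"
  define K where "K = real (CARD('a)*CARD('a))"
  have K: "K > 0" by (simp add: K_def)
  have "Cauchy (\<lambda>k. Rep_sqm (X k))"
    unfolding Cauchy_def
  proof (intro allI impI)
    fix e :: real assume "e > 0"
    then obtain M where M: "\<forall>m\<ge>M. \<forall>n\<ge>M. dist (X m) (X n) < e / K"
      using C K unfolding Cauchy_def by (meson divide_pos_pos)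
    show "\<exists>M. \<forall>m\<ge>M. \<forall>n\<ge>M. dist (Rep_sqm (X m)) (Rep_sqm (X n)) < e"
    proof (intro exI allI impI)
      fix m n assume "m \<ge> M" "n \<ge> M"
      then have "norm (X m - X n) < e / K" using M by (simp add: dist_norm)
      moreover have "norm (Rep_sqm (X m - X n)) \<le> K * norm (X m - X n)"
        unfolding K_def by (rule norm_Rep_le)
      ultimately show "dist (Rep_sqm (X m)) (Rep_sqm (X n)) < e"
        using K by (simp add: dist_norm Rep_sqm_ops field_simps)
    qed
  qed
  then obtain L where L: "(\<lambda>k. Rep_sqm (X k)) \<longlonglongrightarrow> L"
    using Cauchy_convergent_iff convergent_def by blast
  have "X \<longlonglongrightarrow> Abs_sqm L"
    unfolding LIMSEQ_iff
  proof (intro allI impI)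
    fix r :: real assume "r > 0"
    then obtain no where no: "\<forall>n\<ge>no. norm (Rep_sqm (X n) - L) < r / K"
      using L K unfolding LIMSEQ_iff by (meson divide_pos_pos)
    show "\<exists>no. \<forall>n\<ge>no. norm (X n - Abs_sqm L) < r"
    proof (intro exI allI impI)
      fix n assume "n \<ge> no"
      have "norm (X n - Abs_sqm L) \<le> K * norm (Rep_sqm (X n - Abs_sqm L))"
        unfolding K_def by (rule norm_sqm_le)
      also have "Rep_sqm (X n - Abs_sqm L) = Rep_sqm (X n) - L"
        by (simp add: Rep_sqm_ops Abs_sqm_inverse)
      finally show "norm (X n - Abs_sqm L) < r"
        using no \<open>n \<ge> no\<close> K by (simp add: field_simps) (smt (verit) mult.commute)
    qed
  qed
  then show "convergent X" by (auto simp: convergent_def)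
qed

lemma norm_pow_diff_le:
  fixes x h :: "'a::real_normed_algebra_1"
  shows "norm ((x+h)^n - x^n) \<le> (norm x + norm h)^n - norm x ^ n"
proof (induction n)
  case 0 then show ?case by simp
next
  case (Suc n)
  have eq: "(x+h)^Suc n - x^Suc n = (x+h)*((x+h)^n - x^n) + h * x^n"
    by (simp add: algebra_simps)
  have "norm ((x+h)*((x+h)^n - x^n)) \<le> (norm x + norm h) * ((norm x + norm h)^n - norm x ^ n)"
    by (rule order_trans[OF norm_mult_ineq]) (intro mult_mono Suc norm_triangle_ineq; simp)
  moreover have "norm (h * x^n) \<le> norm h * norm x ^ n"
    by (rule order_trans[OF norm_mult_ineq]) (intro mult_left_mono norm_power_ineq; simp)
  ultimately have "norm ((x+h)^Suc n - x^Suc n) \<le> (norm x + norm h) * ((norm x + norm h)^n - norm x ^ n) + norm h * norm x ^ n"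
    unfolding eq by (smt (verit) norm_triangle_ineq)
  then show ?case by (simp add: algebra_simps)
qed

lemma norm_exp_diff_le:
  fixes x h :: "'a::{real_normed_algebra_1,banach}"
  shows "norm (exp (x+h) - exp x) \<le> exp (norm x + norm h) - exp (norm x)"
proof -
  have s: "(\<lambda>n. (x+h)^n /\<^sub>R fact n - x^n /\<^sub>R fact n) sums (exp (x+h) - exp x)"
    by (intro sums_diff exp_converges)
  have r: "(\<lambda>n. (norm x + norm h)^n /\<^sub>R fact n - norm x^n /\<^sub>R fact n) sums (exp (norm x + norm h) - exp (norm x))"
    by (intro sums_diff exp_converges)
  have "norm (suminf (\<lambda>n. (x+h)^n /\<^sub>R fact n - x^n /\<^sub>R fact n)) \<le> suminf (\<lambda>n. (norm x + norm h)^n /\<^sub>R fact n - norm x^n /\<^sub>R fact n)"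
  proof (rule norm_suminf_le)
    fix n
    have "norm ((x+h)^n /\<^sub>R fact n - x^n /\<^sub>R fact n) = norm ((x+h)^n - x^n) / fact n"
      by (simp add: scaleR_diff_right[symmetric] divide_inverse mult.commute)
    also have "\<dots> \<le> ((norm x + norm h)^n - norm x ^ n) / fact n"
      by (intro divide_right_mono norm_pow_diff_le) simp
    finally show "norm ((x+h)^n /\<^sub>R fact n - x^n /\<^sub>R fact n) \<le> (norm x + norm h)^n /\<^sub>R fact n - norm x^n /\<^sub>R fact n"
      by (simp add: divide_inverse right_diff_distrib mult.commute)
  next
    show "summable (\<lambda>n. (norm x + norm h)^n /\<^sub>R fact n - norm x^n /\<^sub>R fact n)"
      using r by (rule sums_summable)
  qed
  then show ?thesis using s r by (simp add: sums_unique[symmetric])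
qed

lemma isCont_exp_banach:
  fixes x :: "'a::{real_normed_algebra_1,banach}"
  shows "isCont exp x"
proof -
  have "((\<lambda>h. exp (x+h) - exp x) \<longlongrightarrow> 0) (at 0)"
  proof (rule Lim_null_comparison)
    show "\<forall>\<^sub>F h in at 0. norm (exp (x+h) - exp x) \<le> exp (norm x + norm h) - exp (norm x)"
      by (intro always_eventually allI norm_exp_diff_le)
    have "((\<lambda>h::'a. exp (norm x + norm h) - exp (norm x)) \<longlongrightarrow> exp (norm x + norm (0::'a)) - exp (norm x)) (at 0)"
      by (intro tendsto_intros)
    then show "((\<lambda>h::'a. exp (norm x + norm h) - exp (norm x)) \<longlongrightarrow> 0) (at 0)" by simp
  qed
  then have "((\<lambda>h. exp (x+h)) \<longlongrightarrow> exp x) (at 0)"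
    by (rule LIM_zero_cancel)
  then show ?thesis by (simp add: isCont_iff add.commute)
qed

lemma norm_exp_sub1_le:
  fixes h :: "'a::{real_normed_algebra_1,banach}"
  shows "norm (exp h - 1 - h) \<le> exp (norm h) - 1 - norm h"
proof -
  define c :: "nat \<Rightarrow> 'a" where "c n = (if n = 0 then 1 else 0) + (if n = 1 then h else 0)" for n
  define d :: "nat \<Rightarrow> real" where "d n = (if n = 0 then 1 else 0) + (if n = 1 then norm h else 0)" for n
  have c: "c sums (1 + h)" unfolding c_def
    by (intro sums_add) (auto intro: sums_single[of 0 "\<lambda>_. 1", simplified] sums_single[of 1 "\<lambda>_. h", simplified])
  have d: "d sums (1 + norm h)" unfolding d_def
    by (intro sums_add) (auto intro: sums_single[of 0 "\<lambda>_. 1", simplified] sums_single[of 1 "\<lambda>_. norm h", simplified])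
  have s: "(\<lambda>n. h^n /\<^sub>R fact n - c n) sums (exp h - (1 + h))"
    by (intro sums_diff exp_converges c)
  have r: "(\<lambda>n. norm h^n /\<^sub>R fact n - d n) sums (exp (norm h) - (1 + norm h))"
    by (intro sums_diff exp_converges d)
  have "norm (suminf (\<lambda>n. h^n /\<^sub>R fact n - c n)) \<le> suminf (\<lambda>n. norm h^n /\<^sub>R fact n - d n)"
  proof (rule norm_suminf_le)
    fix n
    show "norm (h^n /\<^sub>R fact n - c n) \<le> norm h^n /\<^sub>R fact n - d n"
    proof (cases "n \<le> 1")
      case True then have "n = 0 \<or> n = 1" by auto
      then show ?thesis by (auto simp: c_def d_def)
    next
      case False
      then have "norm (h^n /\<^sub>R fact n) \<le> norm h^n /\<^sub>R fact n"
        by (simp add: divide_inverse mult.commute norm_power_ineq mult_right_mono)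
      then show ?thesis using False by (simp add: c_def d_def)
    qed
  next
    show "summable (\<lambda>n. norm h^n /\<^sub>R fact n - d n)" using r by (rule sums_summable)
  qed
  then show ?thesis using s r by (simp add: sums_unique[symmetric] algebra_simps)
qed

lemma norm_exp_sub1_sq:
  fixes h :: "'a::{real_normed_algebra_1,banach}"
  assumes "norm h \<le> 1"
  shows "norm (exp h - 1 - h) \<le> (norm h)\<^sup>2"
  using norm_exp_sub1_le[of h] exp_bound[of "norm h"] assms by simp

lemma card_sq_ge1: "1 \<le> real (CARD('n::finite)*CARD('n))"
proof -
  have "1 \<le> CARD('n)*CARD('n)" by (simp add: Suc_le_eq)
  then show ?thesis by (metis of_nat_1 of_nat_le_iff)
qed

lemma bounded_linear_Rep_sqm: "bounded_linear (Rep_sqm :: 'n::finite sqm \<Rightarrow> _)"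
proof (rule bounded_linear_intro[where K="real (CARD('n)*CARD('n))"])
  fix x :: "'n sqm"
  show "norm (Rep_sqm x) \<le> norm x * real (CARD('n)*CARD('n))"
    using norm_Rep_le[of x] by (simp only: mult.commute)
qed (auto simp: Rep_sqm_ops)

lemma Abs_sqm_ops:
  "Abs_sqm (A + B) = Abs_sqm A + Abs_sqm B"
  "Abs_sqm (A - B) = Abs_sqm A - Abs_sqm B"
  "Abs_sqm (A ** B) = Abs_sqm A * Abs_sqm B"
  "Abs_sqm (r *\<^sub>R A) = r *\<^sub>R Abs_sqm A"
  "Abs_sqm 0 = 0" "Abs_sqm (mat 1) = 1"
  by (metis Rep_sqm_inverse Rep_sqm_ops Abs_sqm_inverse UNIV_I)+

lemma norm_Abs_le: "norm (Abs_sqm (A::real^'n::finite^'n)) \<le> real (CARD('n)*CARD('n)) * norm A"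
  using norm_sqm_le[of "Abs_sqm A"] by (simp add: Abs_sqm_inverse)

lemma bounded_linear_Abs_sqm: "bounded_linear (Abs_sqm :: real^'n::finite^'n \<Rightarrow> _)"
proof (rule bounded_linear_intro[where K="real (CARD('n)*CARD('n))"])
  fix x :: "real^'n^'n"
  show "norm (Abs_sqm x) \<le> norm x * real (CARD('n)*CARD('n))"
    using norm_Abs_le[of x] by (simp only: mult.commute)
qed (auto simp: Abs_sqm_ops)

lemma matpow_Rep: "matpow A k = Rep_sqm (Abs_sqm A ^ k)"
  by (induction k) (simp_all add: matpow_def Rep_sqm_ops Abs_sqm_inverse)

lemma mexp_eq: "mexp A = Rep_sqm (exp (Abs_sqm (A::real^'n::finite^'n)))"
proof -
  have "(\<lambda>k. Rep_sqm (Abs_sqm A ^ k /\<^sub>R fact k)) sums Rep_sqm (exp (Abs_sqm A))"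
    by (rule bounded_linear.sums[OF bounded_linear_Rep_sqm exp_converges])
  then have "(\<lambda>k. (1 / fact k) *\<^sub>R matpow A k) sums Rep_sqm (exp (Abs_sqm A))"
    by (simp add: matpow_Rep Rep_sqm_ops divide_inverse)
  then show ?thesis unfolding mexp_def by (rule sums_unique[symmetric])
qed

lemma mexp_add: "A ** B = B ** A \<Longrightarrow> mexp (A + B) = mexp A ** mexp (B::real^'n::finite^'n)"
  by (simp add: mexp_eq Abs_sqm_ops exp_add_commuting Rep_sqm_ops[symmetric] flip: Abs_sqm_ops(3))

lemma mexp_zero[simp]: "mexp (0::real^'n::finite^'n) = mat 1"
  by (simp add: mexp_eq Abs_sqm_ops Rep_sqm_ops)

lemma mexp_scaleR_add: "mexp (s *\<^sub>R X) ** mexp (t *\<^sub>R X) = mexp ((s+t) *\<^sub>R (X::real^'n::finite^'n))"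
  by (simp add: mexp_add[symmetric] scaleR_add_left matrix_scalar_ac scalar_matrix_assoc[symmetric])

lemma isCont_mexp: "isCont mexp (X::real^'n::finite^'n)"
proof -
  have "isCont (\<lambda>X. Rep_sqm (exp (Abs_sqm (X::real^'n^'n)))) X"
    by (intro continuous_intros isCont_o2[OF _ isCont_exp_banach]
        bounded_linear.continuous[OF bounded_linear_Rep_sqm]
        bounded_linear.continuous[OF bounded_linear_Abs_sqm])
  then show ?thesis by (simp add: mexp_eq[abs_def])
qed

lemma mexp_inv: "mexp (- X) ** mexp X = mat 1" "mexp X ** mexp (- X) = mat (1::real) "
  for X :: "real^'n::finite^'n"
proof -
  have "mexp (- X) ** mexp X = mexp ((-1) *\<^sub>R X) ** mexp (1 *\<^sub>R X)" by simp
  also have "\<dots> = mat 1" by (simp only: mexp_scaleR_add) simp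
  finally show "mexp (- X) ** mexp X = mat 1" .
  have "mexp X ** mexp (- X) = mexp (1 *\<^sub>R X) ** mexp ((-1) *\<^sub>R X)" by simp
  also have "\<dots> = mat 1" by (simp only: mexp_scaleR_add) simp
  finally show "mexp X ** mexp (- X) = mat 1" .
qed

lemma matrix_inv_props:
  fixes A :: "real^'n::finite^'n"
  assumes "invertible A"
  shows "A ** matrix_inv A = mat 1" "matrix_inv A ** A = mat 1"
  using someI_ex[OF assms[unfolded invertible_def]] unfolding matrix_inv_def by auto

lemma matrix_inv_unique:
  fixes A B :: "real^'n::finite^'n"
  assumes "A ** B = mat 1"
  shows "matrix_inv A = B" "invertible A"
proof -
  show inv: "invertible A" using assms invertible_right_inverse by blast
  have "matrix_inv A = matrix_inv A ** (A ** B)" using assms by simp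
  also have "\<dots> = B" by (simp add: matrix_mul_assoc matrix_inv_props[OF inv])
  finally show "matrix_inv A = B" .
qed

lemma mexp_invertible: "invertible (mexp (X::real^'n::finite^'n))"
  and matrix_inv_mexp: "matrix_inv (mexp X) = mexp (- X)"
  using matrix_inv_unique[OF mexp_inv(2)] by auto

lemma mexp_quad:
  fixes X :: "real^'n::finite^'n"
  defines "K \<equiv> real (CARD('n)*CARD('n))"
  assumes "K * norm X \<le> 1"
  shows "norm (mexp X - mat 1 - X) \<le> K^3 * (norm X)\<^sup>2"
proof -
  have K: "K \<ge> 1" unfolding K_def by (rule card_sq_ge1)
  have h: "norm (Abs_sqm X) \<le> K * norm X" unfolding K_def by (rule norm_Abs_le)
  have "mexp X - mat 1 - X = Rep_sqm (exp (Abs_sqm X) - 1 - Abs_sqm X)"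
    by (simp add: mexp_eq Rep_sqm_ops Abs_sqm_inverse)
  then have "norm (mexp X - mat 1 - X) \<le> K * norm (exp (Abs_sqm X) - 1 - Abs_sqm X)"
    unfolding K_def by (metis norm_Rep_le)
  also have "\<dots> \<le> K * (norm (Abs_sqm X))\<^sup>2"
    using K h assms(2) by (intro mult_left_mono norm_exp_sub1_sq) auto
  also have "\<dots> \<le> K * (K * norm X)\<^sup>2"
    using K h by (intro mult_left_mono power_mono) auto
  also have "\<dots> = K^3 * (norm X)\<^sup>2" by (simp add: power2_eq_square power3_eq_cube)
  finally show ?thesis .
qed

lemma mexp_has_derivative_0: "(mexp has_derivative (\<lambda>X. X)) (at (0::real^'n::finite^'n))"
proof -
  define K where "K = real (CARD('n)*CARD('n))"
  have K: "K \<ge> 1" unfolding K_def by (rule card_sq_ge1)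
  have "((\<lambda>h. norm (mexp h - mat 1 - h) / norm h) \<longlongrightarrow> 0) (at (0::real^'n^'n))"
  proof (rule Lim_null_comparison)
    have "\<forall>\<^sub>F Y in at (0::real^'n^'n). norm Y < 1 / K"
      using K unfolding eventually_at by (intro exI[of _ "1/K"]) (auto simp: dist_norm)
    then show "\<forall>\<^sub>F Y in at (0::real^'n^'n). norm (norm (mexp Y - mat 1 - Y) / norm Y) \<le> K^3 * norm Y"
    proof (rule eventually_mono)
      fix Y :: "real^'n^'n" assume "norm Y < 1 / K"
      then have "K * norm Y \<le> 1" using K by (simp add: field_simps)
      then have b: "norm (mexp Y - mat 1 - Y) \<le> K^3 * (norm Y)\<^sup>2"
        unfolding K_def by (rule mexp_quad)
      show "norm (norm (mexp Y - mat 1 - Y) / norm Y) \<le> K^3 * norm Y"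
      proof (cases "Y = 0")
        case False
        have "norm (norm (mexp Y - mat 1 - Y) / norm Y) = norm (mexp Y - mat 1 - Y) / norm Y"
          by simp
        also have "\<dots> \<le> K^3 * (norm Y)\<^sup>2 / norm Y"
          by (intro divide_right_mono) (fact, simp)
        also have "\<dots> = K^3 * norm Y" using False by (simp add: power2_eq_square)
        finally show ?thesis .
      qed (use K in simp)
    qed
    show "((\<lambda>Y::real^'n^'n. K^3 * norm Y) \<longlongrightarrow> 0) (at 0)"
      by (auto intro!: tendsto_eq_intros)
  qed
  then show ?thesis by (simp add: has_derivative_at)
qed

lemma bounded_bilinear_mm: "bounded_bilinear ((**) :: real^'n::finite^'n \<Rightarrow> real^'n^'n \<Rightarrow> real^'n^'n)"
proof -
  have "bilinear ((**) :: real^'n^'n \<Rightarrow> real^'n^'n \<Rightarrow> real^'n^'n)"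
    unfolding bilinear_def
    by (auto intro!: linearI simp: matrix_add_ldistrib matrix_add_rdistrib' matrix_scalar_ac scalar_matrix_assoc)
  then show ?thesis by (simp add: bilinear_conv_bounded_bilinear)
qed

interpretation mm: bounded_bilinear "(**) :: real^'n::finite^'n \<Rightarrow> real^'n^'n \<Rightarrow> real^'n^'n"
  by (rule bounded_bilinear_mm)

definition Qp :: "('m::finite \<Rightarrow> real^'n::finite^'n) \<Rightarrow> 'm list \<Rightarrow> real^'m \<Rightarrow> real^'n^'n" where
  "Qp E xs \<zeta> = foldr (\<lambda>j M. mexp ((\<zeta>$j) *\<^sub>R E j) ** M) xs (mat 1)"

lemma Qp_Nil[simp]: "Qp E [] \<zeta> = mat 1" and Qp_Cons[simp]: "Qp E (x#xs) \<zeta> = mexp ((\<zeta>$x) *\<^sub>R E x) ** Qp E xs \<zeta>"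
  by (simp_all add: Qp_def)

lemma Qp_zero[simp]: "Qp E xs 0 = mat 1"
  by (induction xs) simp_all

lemma continuous_on_Qp: "continuous_on UNIV (Qp E xs)"
proof (induction xs)
  case Nil then show ?case by (simp add: continuous_on_const)
next
  case (Cons x xs)
  have "continuous_on UNIV (\<lambda>\<zeta>::real^_. mexp ((\<zeta>$x) *\<^sub>R E x))"
    by (rule continuous_on_compose2[OF continuous_at_imp_continuous_on[OF ballI[OF isCont_mexp]]])
       (auto intro!: continuous_intros)
  then show ?case using Cons by (simp add: mm.continuous_on)
qed

lemma Qp_has_derivative:
  "distinct xs \<Longrightarrow> (Qp E xs has_derivative (\<lambda>\<zeta>. \<Sum>j\<in>set xs. (\<zeta>$j) *\<^sub>R E j)) (at 0)"
proof (induction xs)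
  case Nil then show ?case by (simp add: has_derivative_const)
next
  case (Cons x xs)
  have lin: "((\<lambda>\<zeta>::real^_. (\<zeta>$x) *\<^sub>R E x) has_derivative (\<lambda>\<zeta>. (\<zeta>$x) *\<^sub>R E x)) (at 0)"
    by (rule bounded_linear_imp_has_derivative, subst linear_conv_bounded_linear[symmetric])
       (auto intro!: linearI simp: scaleR_add_left)
  have "((\<lambda>\<zeta>::real^_. mexp ((\<zeta>$x) *\<^sub>R E x)) has_derivative (\<lambda>\<zeta>. (\<zeta>$x) *\<^sub>R E x)) (at 0)"
    using has_derivative_compose[OF lin, of mexp "\<lambda>X. X"] mexp_has_derivative_0
    by (simp add: o_def)
  from mm.FDERIV[OF this Cons.IH] Cons.prems
  show ?case by (simp add: o_def add.commute)
qed

lemma sum_axis_vec: "(\<Sum>k\<in>UNIV. (\<zeta>$k) *\<^sub>R axis k (1::real)) = (\<zeta>::real^'m::finite)"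
  by (simp add: vec_eq_iff axis_def if_distrib sum.delta cong: if_cong)

lemma linear_Salg: "linear (Salg E)"
  by (rule linearI) (simp_all add: Salg_def scaleR_add_left sum.distrib scaleR_sum_right)

locale LG =
  fixes G :: "(real^'n::finite^'n) set" and E :: "'m::finite \<Rightarrow> real^'n^'n"
  assumes mlg: "matrix_lie_group G" and lb: "lie_basis G E"
begin

lemma G_mult: "A \<in> G \<Longrightarrow> B \<in> G \<Longrightarrow> A ** B \<in> G"
  and G_one: "mat 1 \<in> G"
  and G_inv: "A \<in> G \<Longrightarrow> matrix_inv A \<in> G"
  and G_invertible: "A \<in> G \<Longrightarrow> invertible A"
  using mlg unfolding matrix_lie_group_def by blast+

lemma G_closedin: "closedin (top_of_set {A. invertible A}) G"
  using mlg unfolding matrix_lie_group_def by blast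

lemma span_E: "span (range E) = lie_algebra G" and inj_E: "inj E" and indep_E: "independent (range E)"
  using lb unfolding lie_basis_def by blast+

lemma E_lie: "E j \<in> lie_algebra G"
  using span_E span_base[OF rangeI] by metis

lemma mexp_lie_G: "X \<in> lie_algebra G \<Longrightarrow> mexp (t *\<^sub>R X) \<in> G"
  unfolding lie_algebra_def by blast

lemma mexp_E_G: "mexp (t *\<^sub>R E j) \<in> G"
  using mexp_lie_G[OF E_lie] .

lemma Qp_G: "Qp E xs \<zeta> \<in> G"
  by (induction xs) (simp_all add: G_one G_mult mexp_E_G)

definition cc :: "real^'n^'n \<Rightarrow> real^'m" where
  "cc = (SOME c. linear c \<and> (\<forall>j. c (E j) = axis j 1))"

lemma cc_ex: "\<exists>c. linear c \<and> (\<forall>j. c (E j) = axis j (1::real))"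
proof -
  obtain g where g: "linear g" "\<forall>x\<in>range E. g x = axis (inv E x) (1::real)"
    using linear_independent_extend[OF indep_E, of "\<lambda>x. axis (inv E x) (1::real)"] by metis
  have "\<forall>j. g (E j) = axis j 1"
  proof
    fix j
    have "g (E j) = axis (inv E (E j)) 1" using g(2) by simp
    then show "g (E j) = axis j 1" by (simp add: inv_f_f[OF inj_E])
  qed
  then show ?thesis using g(1) by blast
qed

lemma cc: "linear cc" "cc (E j) = axis j 1"
  using someI_ex[OF cc_ex] unfolding cc_def[symmetric] by auto

lemma bounded_linear_cc: "bounded_linear cc"
  using cc(1) linear_conv_bounded_linear by blast

lemma cc_Salg: "cc (Salg E \<zeta>) = \<zeta>"
proof -
  have "cc (Salg E \<zeta>) = (\<Sum>k\<in>UNIV. (\<zeta>$k) *\<^sub>R cc (E k))"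
    unfolding Salg_def by (simp add: linear_sum[OF cc(1)] linear_scale[OF cc(1)])
  also have "\<dots> = \<zeta>" by (simp add: cc(2) sum_axis_vec)
  finally show ?thesis .
qed

lemma Salg_cc: assumes "X \<in> lie_algebra G" shows "Salg E (cc X) = X"
proof -
  have "X \<in> span (range E)" using assms span_E by simp
  then obtain u where u: "X = (\<Sum>v\<in>range E. u v *\<^sub>R v)"
    unfolding span_finite[OF finite_imageI[OF finite[of UNIV]]] by blast
  have "X = (\<Sum>k\<in>UNIV. u (E k) *\<^sub>R E k)"
    unfolding u by (subst sum.reindex[OF inj_E, unfolded o_def]) simp
  also have "\<dots> = Salg E (\<chi> k. u (E k))" by (simp add: Salg_def)
  finally have X: "X = Salg E (\<chi> k. u (E k))" .
  show ?thesis by (subst (2) X, subst X) (simp add: cc_Salg)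
qed

lemma mexp_nat_G: "mexp Y \<in> G \<Longrightarrow> mexp (real n *\<^sub>R Y) \<in> G"
proof (induction n)
  case 0 then show ?case by (simp add: G_one)
next
  case (Suc n)
  have "mexp (real (Suc n) *\<^sub>R Y) = mexp (1 *\<^sub>R Y) ** mexp (real n *\<^sub>R Y)"
    by (simp only: mexp_scaleR_add) simp
  then show ?case using Suc by (simp add: G_mult)
qed

lemma mexp_int_G: assumes "mexp Y \<in> G" shows "mexp (of_int k *\<^sub>R Y) \<in> G"
proof (cases "k \<ge> 0")
  case True
  then obtain n where "k = int n" using nonneg_int_cases by blast
  then show ?thesis using mexp_nat_G[OF assms, of n] by simp
next
  case False
  define n where "n = nat (- k)"
  have n: "k = - int n" using False by (simp add: n_def)
  have "mexp (of_int k *\<^sub>R Y) = matrix_inv (mexp (real n *\<^sub>R Y))"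
    by (simp add: n matrix_inv_mexp)
  then show ?thesis using G_inv[OF mexp_nat_G[OF assms, of n]] by simp
qed

lemma G_closed_limit:
  assumes "\<And>k. f k \<in> G" "f \<longlonglongrightarrow> l" "invertible l"
  shows "l \<in> G"
proof -
  obtain T where T: "closed T" "G = {A. invertible A} \<inter> T"
    using G_closedin closedin_closed by blast
  have "l \<in> T" using T assms(1,2) by (intro closed_sequentially[of T f l]) auto
  then show ?thesis using T assms(3) by auto
qed

lemma cartan: "\<exists>r0>0. \<forall>Y. cc Y = 0 \<and> mexp Y \<in> G \<and> norm Y < r0 \<longrightarrow> Y = 0"
proof (rule ccontr)
  assume "\<not> ?thesis"
  then have "\<forall>k::nat. \<exists>Y. cc Y = 0 \<and> mexp Y \<in> G \<and> norm Y < inverse (real (Suc k)) \<and> Y \<noteq> 0"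
    by (metis of_nat_0_less_iff positive_imp_inverse_positive zero_less_Suc)
  then have "\<exists>Yf. \<forall>k. cc (Yf k) = 0 \<and> mexp (Yf k) \<in> G \<and> norm (Yf k) < inverse (real (Suc k)) \<and> Yf k \<noteq> 0"
    by (rule choice)
  then obtain Yf where Yf: "\<And>k. cc (Yf k) = 0" "\<And>k. mexp (Yf k) \<in> G"
    "\<And>k. norm (Yf k) < inverse (real (Suc k))" "\<And>k. Yf k \<noteq> 0"
    by blast
  define U where "U k = inverse (norm (Yf k)) *\<^sub>R Yf k" for k
  define S where "S = {V. norm V = 1} \<inter> {V. cc V = 0}"
  have cc0: "cc 0 = 0" using cc(1) linear_0 by blast
  have "closed S" unfolding S_def
    by (intro closed_Int closed_Collect_eq continuous_on_norm_id continuous_on_const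
        linear_continuous_on bounded_linear_cc)
  moreover have "bounded S" unfolding S_def bounded_iff by auto
  ultimately have "compact S" using compact_eq_bounded_closed by blast
  then have sc: "seq_compact S" by (rule compact_imp_seq_compact)
  have US: "U k \<in> S" for k
    using Yf(4)[of k] Yf(1)[of k] unfolding U_def S_def
    by (simp add: linear_scale[OF cc(1)])
  obtain l r where l: "l \<in> S" "strict_mono r" "(U \<circ> r) \<longlonglongrightarrow> l"
    using sc US unfolding seq_compact_def by metis
  define a where "a k = norm (Yf (r k))" for k
  have apos: "a k > 0" for k using Yf(4) by (simp add: a_def)
  have a0: "a \<longlonglongrightarrow> 0"
  proof (rule tendsto_sandwich[of "\<lambda>_. 0" _ _ "\<lambda>k. inverse (real (Suc k))"])
    show "\<forall>\<^sub>F n in sequentially. 0 \<le> a n" using apos by (simp add: less_imp_le)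
    show "\<forall>\<^sub>F n in sequentially. a n \<le> inverse (real (Suc n))"
    proof (intro always_eventually allI)
      fix k
      have "a k < inverse (real (Suc (r k)))" using Yf(3) by (simp add: a_def)
      also have "\<dots> \<le> inverse (real (Suc k))"
        using seq_suble[OF l(2), of k] by (simp add: field_simps)
      finally show "a k \<le> inverse (real (Suc k))" by simp
    qed
  qed (rule tendsto_const, rule LIMSEQ_inverse_real_of_nat)
  have Ur: "Yf (r k) = a k *\<^sub>R U (r k)" for k
    using apos[of k] by (simp add: U_def a_def)
  have "mexp (t *\<^sub>R l) \<in> G" for t
  proof -
    define n where "n k = floor (t / a k)" for k
    have nb: "\<bar>of_int (n k) * a k - t\<bar> \<le> a k" for k
    proof -
      have "of_int (n k) \<le> t / a k" "t / a k < of_int (n k) + 1" unfolding n_def by linarith+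
      then have "of_int (n k) * a k \<le> t" "t < of_int (n k) * a k + a k"
        using apos[of k] by (simp_all add: field_simps)
      then show ?thesis by simp
    qed
    have "(\<lambda>k. of_int (n k) * a k - t) \<longlonglongrightarrow> 0"
      by (rule Lim_null_comparison[OF always_eventually a0]) (simp add: nb)
    then have nt: "(\<lambda>k. of_int (n k) * a k) \<longlonglongrightarrow> t" by (rule LIM_zero_cancel)
    have "(\<lambda>k. (of_int (n k) * a k) *\<^sub>R (U \<circ> r) k) \<longlonglongrightarrow> t *\<^sub>R l"
      by (intro tendsto_scaleR nt l(3))
    then have "(\<lambda>k. of_int (n k) *\<^sub>R Yf (r k)) \<longlonglongrightarrow> t *\<^sub>R l"
      by (simp add: Ur o_def)
    then have "(\<lambda>k. mexp (of_int (n k) *\<^sub>R Yf (r k))) \<longlonglongrightarrow> mexp (t *\<^sub>R l)"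
      by (rule isCont_tendsto_compose[OF isCont_mexp])
    then show ?thesis
      by (rule G_closed_limit[OF mexp_int_G[OF Yf(2)] _ mexp_invertible])
  qed
  then have "l \<in> lie_algebra G" unfolding lie_algebra_def by blast
  then have "l = Salg E (cc l)" by (simp add: Salg_cc)
  also have "\<dots> = 0" using l(1) linear_0[OF linear_Salg] by (simp add: S_def)
  finally show False using l(1) by (simp add: S_def)
qed

lemma bounded_linear_Salg: "bounded_linear (Salg E)"
  using linear_Salg linear_conv_bounded_linear by blast

lemma chart:
  assumes xs: "set xs = UNIV" "distinct xs"
  shows "\<exists>\<rho>>0. \<exists>C. \<forall>M\<in>G. norm (M - mat 1) < \<rho> \<longrightarrow>
            (\<exists>\<zeta>. M = Qp E xs \<zeta> \<and> norm \<zeta> \<le> C * norm (M - mat 1))"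
proof -
  define F where "F Z = Qp E xs (cc Z) ** mexp (Z - Salg E (cc Z))" for Z
  have cc0: "cc 0 = 0" using cc(1) linear_0 by blast
  have S0: "Salg E 0 = 0" using linear_Salg linear_0 by blast
  have F0: "F 0 = mat 1" by (simp add: F_def cc0 S0)
  have d1: "((\<lambda>Z. Qp E xs (cc Z)) has_derivative (\<lambda>Z. Salg E (cc Z))) (at 0)"
  proof -
    have "(cc has_derivative cc) (at 0)" by (rule bounded_linear_imp_has_derivative[OF bounded_linear_cc])
    moreover have "(Qp E xs has_derivative (\<lambda>\<zeta>. \<Sum>j\<in>set xs. (\<zeta>$j) *\<^sub>R E j)) (at (cc 0))"
      using Qp_has_derivative[OF xs(2)] cc0 by simp
    ultimately have "((Qp E xs \<circ> cc) has_derivative ((\<lambda>\<zeta>. \<Sum>j\<in>set xs. (\<zeta>$j) *\<^sub>R E j) \<circ> cc)) (at 0)"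
      by (rule diff_chain_at)
    then show ?thesis by (simp add: o_def xs(1) Salg_def)
  qed
  have d2: "((\<lambda>Z. mexp (Z - Salg E (cc Z))) has_derivative (\<lambda>Z. Z - Salg E (cc Z))) (at 0)"
  proof -
    have bl: "bounded_linear (\<lambda>Z. Z - Salg E (cc Z))"
      using bounded_linear_sub[OF bounded_linear_ident bounded_linear_compose[OF bounded_linear_Salg bounded_linear_cc]] .
    have "((\<lambda>Z. Z - Salg E (cc Z)) has_derivative (\<lambda>Z. Z - Salg E (cc Z))) (at 0)"
      by (rule bounded_linear_imp_has_derivative[OF bl])
    moreover have "(mexp has_derivative (\<lambda>X. X)) (at ((\<lambda>Z. Z - Salg E (cc Z)) 0))"
      using mexp_has_derivative_0 by (simp add: cc0 S0)
    ultimately show ?thesis using diff_chain_at by (fastforce simp: o_def)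
  qed
  have dF: "(F has_derivative (\<lambda>h. h)) (at 0)"
  proof -
    have "(F has_derivative (\<lambda>h. Qp E xs (cc 0) ** (h - Salg E (cc h)) + Salg E (cc h) ** mexp (0 - Salg E (cc 0)))) (at 0)"
      unfolding F_def by (rule mm.FDERIV[OF d1 d2])
    then show ?thesis by (simp add: cc0 S0)
  qed
  have cF: "continuous_on UNIV F"
  proof -
    have c1: "continuous_on UNIV (\<lambda>Z. Qp E xs (cc Z))"
      by (rule continuous_on_compose2[OF continuous_on_Qp, of UNIV cc])
         (auto intro: linear_continuous_on bounded_linear_cc)
    have c2: "continuous_on UNIV (\<lambda>Z. mexp (Z - Salg E (cc Z)))"
    proof -
      have bl: "bounded_linear (\<lambda>Z. Z - Salg E (cc Z))"
        using bounded_linear_sub[OF bounded_linear_ident bounded_linear_compose[OF bounded_linear_Salg bounded_linear_cc]] .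
      show ?thesis
        by (rule continuous_on_compose2[OF continuous_at_imp_continuous_on[OF ballI[OF isCont_mexp]] linear_continuous_on[OF bl]]) auto
    qed
    show ?thesis unfolding F_def by (intro mm.continuous_on c1 c2)
  qed
  obtain r0 where r0: "r0 > 0" "\<And>Y. cc Y = 0 \<Longrightarrow> mexp Y \<in> G \<Longrightarrow> norm Y < r0 \<Longrightarrow> Y = 0"
    using cartan by blast
  obtain Kc where Kc: "Kc > 0" "\<And>x. norm (cc x) \<le> norm x * Kc"
    using bounded_linear.pos_bounded[OF bounded_linear_cc] by blast
  obtain Ks where Ks: "Ks > 0" "\<And>x. norm (Salg E x) \<le> norm x * Ks"
    using bounded_linear.pos_bounded[OF bounded_linear_Salg] by blast
  obtain d where d: "d > 0" "\<And>y. norm y < d \<Longrightarrow> norm (F y - mat 1 - y) \<le> 1/2 * norm y"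
    using dF unfolding has_derivative_at_alt F0
    by (metis diff_zero half_gt_zero_iff zero_less_one)
  define r1 where "r1 = min d (r0 / (1 + Ks * Kc))"
  have pk: "1 + Ks * Kc > 0" using Kc Ks by (simp add: add_pos_pos)
  then have r1: "r1 > 0" using d r0 by (simp add: r1_def)
  have "F 0 \<in> interior (F ` ball 0 r1)"
    by (rule sussmann_open_mapping[of UNIV F 0 "\<lambda>h. h" "\<lambda>h. h"])
       (use cF dF r1 in auto)
  then obtain \<rho> where \<rho>: "\<rho> > 0" "ball (mat 1) \<rho> \<subseteq> F ` ball 0 r1"
    unfolding F0 by (meson open_contains_ball open_interior interior_subset subset_trans)
  have main: "\<exists>\<zeta>. M = Qp E xs \<zeta> \<and> norm \<zeta> \<le> 2 * Kc * norm (M - mat 1)"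
    if M: "M \<in> G" "norm (M - mat 1) < \<rho>" for M
  proof -
    from M have "M \<in> ball (mat 1) \<rho>" by (simp add: dist_norm norm_minus_commute)
    then obtain Z where Z: "norm Z < r1" "M = F Z" using \<rho>(2) by (auto simp: dist_norm)
    define Y where "Y = Z - Salg E (cc Z)"
    have ccY: "cc Y = 0" unfolding Y_def by (simp add: linear_diff[OF cc(1)] cc_Salg)
    have QG: "Qp E xs (cc Z) \<in> G" by (rule Qp_G)
    have MQ: "M = Qp E xs (cc Z) ** mexp Y" using Z by (simp add: F_def Y_def)
    have "mexp Y = matrix_inv (Qp E xs (cc Z)) ** M"
      by (simp add: MQ matrix_mul_assoc matrix_inv_props(2)[OF G_invertible[OF QG]])
    then have YG: "mexp Y \<in> G" using G_mult G_inv QG M(1) by simp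
    have "norm Y \<le> norm Z + norm (Salg E (cc Z))" unfolding Y_def by (rule norm_triangle_ineq4)
    also have "\<dots> \<le> norm Z + norm Z * Kc * Ks"
      using order_trans[OF Ks(2)[of "cc Z"] mult_right_mono[OF Kc(2)[of Z] less_imp_le[OF Ks(1)]]] by simp
    also have "\<dots> = (1 + Ks * Kc) * norm Z" by (simp add: algebra_simps)
    also have "\<dots> < (1 + Ks * Kc) * (r0 / (1 + Ks * Kc))"
      using Z(1) pk by (intro mult_strict_left_mono) (auto simp: r1_def)
    also have "\<dots> = r0" using pk by simp
    finally have "Y = 0" using r0(2)[OF ccY YG] by blast
    then have MQ': "M = Qp E xs (cc Z)" using MQ by simp
    have "norm (M - mat 1 - Z) \<le> 1/2 * norm Z" using d(2)[of Z] Z r1_def by simp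
    moreover have "norm Z \<le> norm (M - mat 1) + norm (M - mat 1 - Z)"
      using norm_triangle_ineq4[of "M - mat 1" "M - mat 1 - Z"] by simp
    ultimately have "norm Z \<le> 2 * norm (M - mat 1)" by linarith
    then have "norm (cc Z) \<le> 2 * Kc * norm (M - mat 1)"
      using order_trans[OF Kc(2)[of Z] mult_right_mono[OF \<open>norm Z \<le> 2 * norm (M - mat 1)\<close> less_imp_le[OF Kc(1)]]]
      by (simp add: algebra_simps)
    then show "\<exists>\<zeta>. M = Qp E xs \<zeta> \<and> norm \<zeta> \<le> 2 * Kc * norm (M - mat 1)"
      using MQ' by blast
  qed
  then show ?thesis using \<rho>(1) by blast
qed

end

lemma Salg_axis: "Salg E (axis j 1) = E j"
proof -
  have "(\<lambda>k. (axis j (1::real))$k *\<^sub>R E k) = (\<lambda>k. if k = j then E k else 0)"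
    by (auto simp: axis_def)
  then show ?thesis unfolding Salg_def by (simp only:) simp
qed

lemma deriv_step:
  fixes D :: "real^'n::finite^'n \<Rightarrow> real^'n^'n \<Rightarrow> real" and E :: "'m::finite \<Rightarrow> real^'n^'n"
  assumes "has_LV E D (mexp (t *\<^sub>R E j) ** P) B"
  shows "((\<lambda>s. D (mexp (s *\<^sub>R E j) ** P) B) has_real_derivative (LV E D (mexp (t *\<^sub>R E j) ** P) B $ j)) (at t)"
proof -
  define V where "V = mexp (t *\<^sub>R E j) ** P"
  obtain l where l: "(qV E D V B (axis j 1) \<longlongrightarrow> l) (at 0)"
    using assms unfolding has_LV_def V_def by blast
  have LVj: "LV E D V B $ j = l"
    unfolding LV_def using l by (simp add: tendsto_Lim)
  have q: "qV E D V B (axis j 1) h = (D (mexp ((t + h) *\<^sub>R E j) ** P) B - D (mexp (t *\<^sub>R E j) ** P) B) / h" for h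
    unfolding qV_def V_def Salg_axis
    by (simp add: matrix_mul_assoc mexp_scaleR_add add.commute)
  have "(\<lambda>h. (D (mexp ((t + h) *\<^sub>R E j) ** P) B - D (mexp (t *\<^sub>R E j) ** P) B) / h) = qV E D V B (axis j 1)"
    by (rule ext) (simp add: q)
  then show ?thesis
    unfolding DERIV_def using l LVj by (simp add: V_def)
qed

lemma step_bound:
  fixes D :: "real^'n::finite^'n \<Rightarrow> real^'n^'n \<Rightarrow> real" and E :: "'m::finite \<Rightarrow> real^'n^'n"
  assumes good: "\<And>t. min 0 c \<le> t \<Longrightarrow> t \<le> max 0 c \<Longrightarrow>
      has_LV E D (mexp (t *\<^sub>R E j) ** P) B \<and> norm (LV E D (mexp (t *\<^sub>R E j) ** P) B) \<le> \<epsilon>"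
  shows "\<bar>D (mexp (c *\<^sub>R E j) ** P) B - D P B\<bar> \<le> \<epsilon> * \<bar>c\<bar>"
proof -
  define g where "g s = D (mexp (s *\<^sub>R E j) ** P) B" for s
  define g' where "g' s = LV E D (mexp (s *\<^sub>R E j) ** P) B $ j" for s
  have g0: "g 0 = D P B" by (simp add: g_def)
  have der: "(g has_real_derivative g' t) (at t)" if "min 0 c \<le> t" "t \<le> max 0 c" for t
    unfolding g_def g'_def using deriv_step good[OF that] by blast
  have bd: "\<bar>g' t\<bar> \<le> \<epsilon>" if "min 0 c \<le> t" "t \<le> max 0 c" for t
    using good[OF that] component_le_norm_cart[of "LV E D (mexp (t *\<^sub>R E j) ** P) B" j]
    unfolding g'_def by linarith
  consider "c = 0" | "c > 0" | "c < 0" by linarith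
  then have "\<bar>g c - g 0\<bar> \<le> \<epsilon> * \<bar>c\<bar>"
  proof cases
    case 1 then show ?thesis by simp
  next
    case 2
    obtain z where z: "0 < z" "z < c" "g c - g 0 = (c - 0) * g' z"
      using MVT2[of 0 c g g'] der 2 by auto
    have "\<bar>g' z\<bar> \<le> \<epsilon>" using bd z 2 by auto
    then show ?thesis using z 2 by (simp add: abs_mult mult.commute mult_left_mono)
  next
    case 3
    obtain z where z: "c < z" "z < 0" "g 0 - g c = (0 - c) * g' z"
      using MVT2[of c 0 g g'] der 3 by auto
    have "\<bar>g' z\<bar> \<le> \<epsilon>" using bd z 3 by auto
    then show ?thesis using z 3 by (simp add: abs_mult abs_minus_commute mult.commute mult_left_mono)
  qed
  then show ?thesis by (simp add: g_def)
qed

lemma Qp_cong: "(\<And>j. j \<in> set xs \<Longrightarrow> \<zeta>$j = \<zeta>'$j) \<Longrightarrow> Qp E xs \<zeta> = Qp E xs \<zeta>'"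
  by (induction xs) auto

lemma walk_bound:
  fixes D :: "real^'n::finite^'n \<Rightarrow> real^'n^'n \<Rightarrow> real" and E :: "'m::finite \<Rightarrow> real^'n^'n"
  assumes "distinct xs"
    and good: "\<And>\<zeta>' k. (\<And>i. \<bar>\<zeta>'$i\<bar> \<le> \<bar>\<zeta>$i\<bar>) \<Longrightarrow>
        has_LV E D (Qp E (drop k xs) \<zeta>' ** A) B \<and> norm (LV E D (Qp E (drop k xs) \<zeta>' ** A) B) \<le> \<epsilon>"
  shows "\<bar>D (Qp E xs \<zeta> ** A) B - D A B\<bar> \<le> \<epsilon> * (\<Sum>j\<leftarrow>xs. \<bar>\<zeta>$j\<bar>)"
  using assms
proof (induction xs)
  case Nil then show ?case by simp
next
  case (Cons x xs)
  have IH: "\<bar>D (Qp E xs \<zeta> ** A) B - D A B\<bar> \<le> \<epsilon> * (\<Sum>j\<leftarrow>xs. \<bar>\<zeta>$j\<bar>)"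
  proof (rule Cons.IH)
    show "distinct xs" using Cons.prems by simp
    fix \<zeta>' k assume "\<And>i. \<bar>\<zeta>'$i\<bar> \<le> \<bar>\<zeta>$i\<bar>"
    from Cons.prems(2)[OF this, of "Suc k"]
    show "has_LV E D (Qp E (drop k xs) \<zeta>' ** A) B \<and> norm (LV E D (Qp E (drop k xs) \<zeta>' ** A) B) \<le> \<epsilon>"
      by simp
  qed
  have st: "\<bar>D (mexp ((\<zeta>$x) *\<^sub>R E x) ** (Qp E xs \<zeta> ** A)) B - D (Qp E xs \<zeta> ** A) B\<bar> \<le> \<epsilon> * \<bar>\<zeta>$x\<bar>"
  proof (rule step_bound)
    fix t assume t: "min 0 (\<zeta>$x) \<le> t" "t \<le> max 0 (\<zeta>$x)"
    define \<zeta>' where "\<zeta>' = (\<chi> i. if i = x then t else \<zeta>$i)"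
    have le: "\<bar>\<zeta>'$i\<bar> \<le> \<bar>\<zeta>$i\<bar>" for i
      using t by (auto simp: \<zeta>'_def)
    have x: "x \<notin> set xs" using Cons.prems by simp
    have "Qp E xs \<zeta>' = Qp E xs \<zeta>"
      by (rule Qp_cong) (use x in \<open>auto simp: \<zeta>'_def\<close>)
    then have eq: "mexp (t *\<^sub>R E x) ** (Qp E xs \<zeta> ** A) = Qp E (drop 0 (x#xs)) \<zeta>' ** A"
      by (simp add: \<zeta>'_def matrix_mul_assoc)
    show "has_LV E D (mexp (t *\<^sub>R E x) ** (Qp E xs \<zeta> ** A)) B \<and>
          norm (LV E D (mexp (t *\<^sub>R E x) ** (Qp E xs \<zeta> ** A)) B) \<le> \<epsilon>"
      unfolding eq by (rule Cons.prems(2)[OF le])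
  qed
  have "Qp E (x#xs) \<zeta> ** A = mexp ((\<zeta>$x) *\<^sub>R E x) ** (Qp E xs \<zeta> ** A)"
    by (simp add: matrix_mul_assoc)
  then show ?case using IH st by (simp add: algebra_simps)
qed

lemma norm_mono_abs: "(\<And>i. \<bar>x$i\<bar> \<le> \<bar>y$i\<bar>) \<Longrightarrow> norm (x::real^'m::finite) \<le> norm y"
  unfolding norm_vec_def by (rule L2_set_mono) auto

lemma sum_abs_le_card_norm: "(\<Sum>j\<in>UNIV. \<bar>x$j\<bar>) \<le> real CARD('m) * norm (x::real^'m::finite)"
proof -
  have "(\<Sum>j\<in>UNIV. \<bar>x$j\<bar>) \<le> (\<Sum>j\<in>(UNIV::'m set). norm x)"
    by (intro sum_mono component_le_norm_cart)
  then show ?thesis by simp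
qed

theorem lemma6:
  fixes G :: "(real^'n^'n) set"
    and E :: "'m::finite \<Rightarrow> real^'n^'n"
    and Dh :: "real^'n^'n \<Rightarrow> real^'n^'n \<Rightarrow> real"
    and Hd :: "real \<Rightarrow> real^'n^'n"
    and H :: "real^'n^'n"
  assumes "matrix_lie_group G"
    and "connected G"
    and "lie_basis G E"
    and "chainable G E Dh"
    and "locally_linear G E Dh"
    and "curve G Hd"
    and "H \<in> G"
    and "H \<notin> Cset Hd \<union> Pset G E Dh Hd"
  shows "xiN E Dh Hd H \<noteq> 0"
proof
  assume xi0: "xiN E Dh Hd H = 0"
  interpret LG G E using assms(1,3) by unfold_locales
  define A where "A = H"
  define s where "s = sstar Dh Hd H"
  define B where "B = Hd s"
  have nP1: "H \<notin> P1 Dh Hd" and nP2: "H \<notin> P2 G E Dh Hd" and nC: "H \<notin> Cset Hd"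
    using assms(8) unfolding Pset_def by auto
  have "\<exists>!s. is_minimizer Dh Hd H s" using nP1 unfolding P1_def by simp
  then have sm: "is_minimizer Dh Hd H s" unfolding s_def sstar_def by (rule theI')
  then have s01: "s \<in> {0..1}" unfolding is_minimizer_def by simp
  have BG: "B \<in> G" using assms(6) s01 unfolding curve_def B_def by blast
  have AG: "A \<in> G" using assms(7) by (simp add: A_def)
  have AB: "A \<noteq> B" using nC s01 unfolding A_def B_def Cset_def by auto
  have dV: "diff_V G E Dh A B"
    using nP2 nP1 nC unfolding P2_def A_def B_def s_def by auto
  have LV0: "LV E Dh A B = 0"
    using xi0 unfolding xiN_def A_def B_def s_def by simp
  obtain \<Phi> where pg: "path_gen G \<Phi>" and ch: "chain_eq G Dh \<Phi>"
    and ll: "\<And>A B. A \<in> G \<Longrightarrow> B \<in> G \<Longrightarrow> A \<noteq> B \<Longrightarrow>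
               \<exists>L>0. ((\<lambda>\<sigma>. Dh A (\<Phi> \<sigma> A B) / \<sigma>) \<longlongrightarrow> L) (at_right 0)"
    using assms(5) unfolding locally_linear_def by blast
  obtain L where L: "L > 0" "((\<lambda>\<sigma>. Dh A (\<Phi> \<sigma> A B) / \<sigma>) \<longlongrightarrow> L) (at_right 0)"
    using ll[OF AG BG AB] by blast
  have PhiG: "\<Phi> \<sigma> A B \<in> G" if "\<sigma> \<in> {0..1}" for \<sigma>
    using pg that AG BG unfolding path_gen_def by blast
  have Phi0: "\<Phi> 0 A B = A" using pg AG BG unfolding path_gen_def by blast
  have chain: "Dh A B = Dh A (\<Phi> \<sigma> A B) + Dh (\<Phi> \<sigma> A B) B" if "\<sigma> \<in> {0..1}" for \<sigma>
    using ch that AG BG unfolding chain_eq_def by blast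
  obtain K1 d1 where K1: "K1 \<ge> 0" "d1 > 0"
    "\<And>\<sigma>. \<sigma> \<in> {0..1} \<Longrightarrow> \<sigma> < d1 \<Longrightarrow> norm (\<Phi> \<sigma> A B - A) \<le> K1 * \<sigma>"
  proof -
    have "(\<lambda>s. \<Phi> s A B) differentiable (at 0 within {0..1})"
      using pg AG BG unfolding path_gen_def by auto
    then obtain f' where f': "((\<lambda>s. \<Phi> s A B) has_derivative f') (at 0 within {0..1})"
      unfolding differentiable_def by blast
    then have blf: "bounded_linear f'" and
      ev0: "\<forall>e>0. \<exists>d>0. \<forall>y\<in>{0..1}. norm (y - 0) < d \<longrightarrow> norm (\<Phi> y A B - \<Phi> 0 A B - f' (y - 0)) \<le> e * norm (y - 0)"
      unfolding has_derivative_within_alt by blast+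
    have ev: "\<exists>d>0. \<forall>y\<in>{0..1}. norm (y - 0) < d \<longrightarrow> norm (\<Phi> y A B - \<Phi> 0 A B - f' (y - 0)) \<le> 1 * norm (y - 0)"
      using spec[OF ev0, of 1] by simp
    obtain Kf where Kf: "Kf > 0" "\<And>x. norm (f' x) \<le> norm x * Kf"
      using bounded_linear.pos_bounded[OF blf] by blast
    obtain d where d: "d > 0" "\<And>y. y \<in> {0..1} \<Longrightarrow> norm y < d \<Longrightarrow> norm (\<Phi> y A B - A - f' y) \<le> norm y"
      using ev Phi0 by auto
    show ?thesis
    proof (rule that[of "1 + Kf" d])
      fix \<sigma> :: real assume \<sigma>: "\<sigma> \<in> {0..1}" "\<sigma> < d"
      have "norm (\<Phi> \<sigma> A B - A) \<le> norm (\<Phi> \<sigma> A B - A - f' \<sigma>) + norm (f' \<sigma>)"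
        using norm_triangle_ineq[of "\<Phi> \<sigma> A B - A - f' \<sigma>" "f' \<sigma>"] by simp
      also have "\<dots> \<le> norm \<sigma> + norm \<sigma> * Kf"
        using d(2)[OF \<sigma>(1)] \<sigma> Kf(2)[of \<sigma>] by auto
      also have "\<dots> = (1 + Kf) * \<sigma>" using \<sigma> by (simp add: algebra_simps)
      finally show "norm (\<Phi> \<sigma> A B - A) \<le> (1 + Kf) * \<sigma>" .
    qed (use Kf d in auto)
  qed
  define Ai where "Ai = matrix_inv A"
  have AiG: "Ai \<in> G" unfolding Ai_def using G_inv[OF AG] .
  have invA: "A ** Ai = mat 1" "Ai ** A = mat 1"
    unfolding Ai_def using matrix_inv_props[OF G_invertible[OF AG]] by auto
  obtain Km where Km: "Km > 0" "\<And>(a::real^'n^'n) (b::real^'n^'n). norm (a ** b) \<le> norm a * norm b * Km"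
  proof -
    have "\<exists>K>0. \<forall>(a::real^'n^'n) (b::real^'n^'n). norm (a ** b) \<le> norm a * norm b * K"
      by (rule bounded_bilinear.pos_bounded[OF bounded_bilinear_mm])
    then obtain K where K: "K > 0" "\<forall>(a::real^'n^'n) (b::real^'n^'n). norm (a ** b) \<le> norm a * norm b * K"
      by blast
    show ?thesis by (rule that[OF K(1)]) (use K(2) in blast)
  qed
  define K2 where "K2 = K1 * norm Ai * Km"
  have K2: "K2 \<ge> 0" unfolding K2_def using K1(1) Km(1) by (simp add: less_imp_le)
  have Mb: "norm (\<Phi> \<sigma> A B ** Ai - mat 1) \<le> K2 * \<sigma>" if "\<sigma> \<in> {0..1}" "\<sigma> < d1" for \<sigma>
  proof -
    have "\<Phi> \<sigma> A B ** Ai - mat 1 = (\<Phi> \<sigma> A B - A) ** Ai" by (simp add: mm.diff_left invA)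
    then have "norm (\<Phi> \<sigma> A B ** Ai - mat 1) \<le> norm (\<Phi> \<sigma> A B - A) * norm Ai * Km"
      using Km(2)[of "\<Phi> \<sigma> A B - A" Ai] by simp
    also have "\<dots> \<le> (K1 * \<sigma>) * norm Ai * Km"
      using K1(3)[OF that] Km(1) by (intro mult_right_mono) auto
    finally show ?thesis by (simp add: K2_def algebra_simps)
  qed
  obtain xs where xs: "set xs = (UNIV::'m set)" "distinct xs"
    using finite_distinct_list[OF finite[of "UNIV::'m set"]] by blast
  obtain \<rho> C where \<rho>: "\<rho> > 0" and chartC: "\<And>M. M \<in> G \<Longrightarrow> norm (M - mat 1) < \<rho> \<Longrightarrow>
      \<exists>\<zeta>. M = Qp E xs \<zeta> \<and> norm \<zeta> \<le> C * norm (M - mat 1)"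
    using chart[OF xs] by metis
  define Kt where "Kt = real CARD('m) * \<bar>C\<bar> * K2 + 1"
  have Kt0: "real CARD('m) * \<bar>C\<bar> * K2 \<ge> 0" using K2 by simp
  have Kt: "Kt > 0" unfolding Kt_def using Kt0 by linarith
  define \<epsilon> where "\<epsilon> = L / (2 * Kt)"
  have \<epsilon>: "\<epsilon> > 0" unfolding \<epsilon>_def using L(1) Kt by simp
  obtain \<delta> where \<delta>: "\<delta> > 0" "\<And>V. V \<in> G \<Longrightarrow> dist V A < \<delta> \<Longrightarrow>
      has_LV E Dh V B \<and> norm (LV E Dh V B) \<le> \<epsilon>"
  proof -
    have h0: "has_LV E Dh A B"
      and hev: "\<forall>\<^sub>F p in at (A, B) within G \<times> G. has_LV E Dh (fst p) (snd p)"
      and hc: "continuous (at (A, B) within G \<times> G) (\<lambda>p. LV E Dh (fst p) (snd p))"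
      using dV unfolding diff_V_def by auto
    obtain da where da: "da > 0" "\<And>p. p \<in> G \<times> G \<Longrightarrow> p \<noteq> (A, B) \<Longrightarrow> dist p (A, B) < da \<Longrightarrow> has_LV E Dh (fst p) (snd p)"
      using hev unfolding eventually_at by blast
    obtain db where db: "db > 0" "\<And>p. p \<in> G \<times> G \<Longrightarrow> dist p (A, B) < db \<Longrightarrow>
        dist (LV E Dh (fst p) (snd p)) (LV E Dh A B) < \<epsilon>"
      using hc \<epsilon> unfolding continuous_within_eps_delta by (metis fst_conv snd_conv)
    show ?thesis
    proof (rule that[of "min da db"])
      fix V assume V: "V \<in> G" "dist V A < min da db"
      have dp: "dist (V, B) (A, B) = dist V A" by (simp add: dist_Pair_Pair)
      have "has_LV E Dh V B"
      proof (cases "V = A")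
        case True then show ?thesis using h0 by simp
      next
        case False then show ?thesis using da(2)[of "(V, B)"] V BG dp by auto
      qed
      moreover have "norm (LV E Dh V B) \<le> \<epsilon>"
        using db(2)[of "(V, B)"] V BG dp LV0 by (auto simp: dist_norm)
      ultimately show "has_LV E Dh V B \<and> norm (LV E Dh V B) \<le> \<epsilon>" by blast
    qed (use da db in auto)
  qed
  obtain r where r: "r > 0" "\<And>\<zeta>' k. norm \<zeta>' < r \<Longrightarrow> dist (Qp E (drop k xs) \<zeta>' ** A) A < \<delta>"
  proof -
    have "\<forall>k\<in>{..length xs}. \<forall>\<^sub>F \<zeta>' in at 0. dist (Qp E (drop k xs) \<zeta>' ** A) A < \<delta>"
    proof
      fix k
      have "isCont (Qp E (drop k xs)) 0"
        using continuous_on_Qp[of E "drop k xs"] by (simp add: continuous_on_eq_continuous_at)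
      then have "((\<lambda>\<zeta>'. Qp E (drop k xs) \<zeta>' ** A) \<longlongrightarrow> Qp E (drop k xs) 0 ** A) (at 0)"
        by (intro mm.tendsto tendsto_const) (simp add: isCont_def)
      then have "((\<lambda>\<zeta>'. Qp E (drop k xs) \<zeta>' ** A) \<longlongrightarrow> A) (at 0)" by simp
      then show "\<forall>\<^sub>F \<zeta>' in at 0. dist (Qp E (drop k xs) \<zeta>' ** A) A < \<delta>"
        using \<delta>(1) by (rule tendstoD)
    qed
    then have "\<forall>\<^sub>F \<zeta>' in at 0. \<forall>k\<in>{..length xs}. dist (Qp E (drop k xs) \<zeta>' ** A) A < \<delta>"
      by (rule eventually_ball_finite[rotated]) simp
    then obtain d where d: "d > 0" "\<And>\<zeta>'. \<zeta>' \<noteq> 0 \<Longrightarrow> dist \<zeta>' 0 < d \<Longrightarrow>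
        \<forall>k\<in>{..length xs}. dist (Qp E (drop k xs) \<zeta>' ** A) A < \<delta>"
      unfolding eventually_at by auto
    show ?thesis
    proof (rule that[OF d(1)])
      fix \<zeta>' :: "real^'m" and k assume z: "norm \<zeta>' < d"
      have dk: "drop k xs = drop (min k (length xs)) xs" by (simp add: min_def)
      show "dist (Qp E (drop k xs) \<zeta>' ** A) A < \<delta>"
      proof (cases "\<zeta>' = 0")
        case True then show ?thesis using \<delta>(1) by simp
      next
        case False
        then show ?thesis using d(2)[of \<zeta>'] z unfolding dk by auto
      qed
    qed
  qed
  have est: "Dh A (\<Phi> \<sigma> A B) \<le> L / 2 * \<sigma>"
    if \<sigma>: "0 < \<sigma>" "\<sigma> \<le> 1" "\<sigma> < d1" "K2 * \<sigma> < \<rho>" "\<bar>C\<bar> * (K2 * \<sigma>) < r" for \<sigma>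
  proof -
    have s01: "\<sigma> \<in> {0..1}" using \<sigma> by simp
    define M where "M = \<Phi> \<sigma> A B ** Ai"
    have MG: "M \<in> G" unfolding M_def using G_mult[OF PhiG[OF s01] AiG] .
    have Mn: "norm (M - mat 1) \<le> K2 * \<sigma>" unfolding M_def using Mb[OF s01 \<sigma>(3)] .
    then obtain \<zeta> where \<zeta>: "M = Qp E xs \<zeta>" "norm \<zeta> \<le> C * norm (M - mat 1)"
      using chartC[OF MG] \<sigma>(4) by fastforce
    have "C * norm (M - mat 1) \<le> \<bar>C\<bar> * norm (M - mat 1)"
      by (intro mult_right_mono) auto
    also have "\<dots> \<le> \<bar>C\<bar> * (K2 * \<sigma>)" by (intro mult_left_mono Mn) auto
    finally have nz: "norm \<zeta> \<le> \<bar>C\<bar> * (K2 * \<sigma>)" using \<zeta>(2) by linarith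
    have PhiM: "\<Phi> \<sigma> A B = Qp E xs \<zeta> ** A"
      using \<zeta>(1) unfolding M_def by (metis invA(2) matrix_mul_assoc matrix_mul_rid)
    have wb: "\<bar>Dh (Qp E xs \<zeta> ** A) B - Dh A B\<bar> \<le> \<epsilon> * (\<Sum>j\<leftarrow>xs. \<bar>\<zeta>$j\<bar>)"
    proof (rule walk_bound[OF xs(2)])
      fix \<zeta>' :: "real^'m" and k assume le: "\<And>i. \<bar>\<zeta>'$i\<bar> \<le> \<bar>\<zeta>$i\<bar>"
      have "norm \<zeta>' < r" using norm_mono_abs[OF le] nz \<sigma>(5) by linarith
      then have "dist (Qp E (drop k xs) \<zeta>' ** A) A < \<delta>" by (rule r(2))
      moreover have "Qp E (drop k xs) \<zeta>' ** A \<in> G" by (intro G_mult Qp_G AG)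
      ultimately show "has_LV E Dh (Qp E (drop k xs) \<zeta>' ** A) B \<and>
          norm (LV E Dh (Qp E (drop k xs) \<zeta>' ** A) B) \<le> \<epsilon>"
        using \<delta>(2) by blast
    qed
    have "(\<Sum>j\<leftarrow>xs. \<bar>\<zeta>$j\<bar>) = (\<Sum>j\<in>UNIV. \<bar>\<zeta>$j\<bar>)"
      using xs by (simp add: sum_list_distinct_conv_sum_set)
    also have "\<dots> \<le> real CARD('m) * norm \<zeta>" by (rule sum_abs_le_card_norm)
    also have "\<dots> \<le> real CARD('m) * (\<bar>C\<bar> * (K2 * \<sigma>))"
      by (intro mult_left_mono nz) simp
    also have "\<dots> \<le> Kt * \<sigma>" unfolding Kt_def using \<sigma>(1) by (simp add: algebra_simps)
    finally have "\<epsilon> * (\<Sum>j\<leftarrow>xs. \<bar>\<zeta>$j\<bar>) \<le> \<epsilon> * (Kt * \<sigma>)"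
      using \<epsilon> by (intro mult_left_mono) auto
    also have "\<dots> = L / 2 * \<sigma>" unfolding \<epsilon>_def using Kt by (simp add: field_simps)
    finally have "\<bar>Dh (\<Phi> \<sigma> A B) B - Dh A B\<bar> \<le> L / 2 * \<sigma>" using wb PhiM by simp
    then show ?thesis using chain[OF s01] by linarith
  qed
  have "\<forall>\<^sub>F \<sigma> in at_right 0. Dh A (\<Phi> \<sigma> A B) / \<sigma> \<le> L / 2"
  proof -
    define b where "b = min 1 (min d1 (min (\<rho> / (K2 + 1)) (r / (\<bar>C\<bar> * K2 + 1))))"
    have pos: "K2 + 1 > 0" "\<bar>C\<bar> * K2 + 1 > 0" using K2 by (auto intro: add_nonneg_pos)
    have b: "b > 0" unfolding b_def using pos \<rho> r K1 by auto
    show ?thesis unfolding eventually_at_right[OF b]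
    proof (intro exI[of _ b] conjI b allI impI)
      fix \<sigma> :: real assume \<sigma>: "0 < \<sigma>" "\<sigma> < b"
      have "K2 * \<sigma> \<le> (K2 + 1) * \<sigma>" using \<sigma> by (simp add: algebra_simps)
      also have "\<dots> < (K2 + 1) * (\<rho> / (K2 + 1))"
        using \<sigma> pos by (intro mult_strict_left_mono) (auto simp: b_def)
      also have "\<dots> = \<rho>" using pos by simp
      finally have h1: "K2 * \<sigma> < \<rho>" .
      have "\<bar>C\<bar> * (K2 * \<sigma>) \<le> (\<bar>C\<bar> * K2 + 1) * \<sigma>" using \<sigma> by (simp add: algebra_simps)
      also have "\<dots> < (\<bar>C\<bar> * K2 + 1) * (r / (\<bar>C\<bar> * K2 + 1))"
        using \<sigma> pos by (intro mult_strict_left_mono) (auto simp: b_def)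
      also have "\<dots> = r" using pos by simp
      finally have h2: "\<bar>C\<bar> * (K2 * \<sigma>) < r" .
      have "Dh A (\<Phi> \<sigma> A B) \<le> L / 2 * \<sigma>"
        by (rule est) (use \<sigma> h1 h2 in \<open>auto simp: b_def\<close>)
      then show "Dh A (\<Phi> \<sigma> A B) / \<sigma> \<le> L / 2" using \<sigma> by (simp add: divide_le_eq)
    qed
  qed
  then have "L \<le> L / 2"
    by (rule tendsto_upperbound[OF L(2)]) (simp add: trivial_limit_at_right_real)
  then show False using L(1) by linarith
qed

end
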